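(* Let $d\in\mathbb N$, let $D\subset\mathbb R_+^d$ be a nonempty convex compact set, and let $\mathcal P\subset\mathbb R_+^d$ be a nonempty convex compact polytope. Then $$\inf_{\alpha\in\mathcal P}\max_{y\in D}\min_{i\in[d]}\frac{y_i}{\alpha_i}=\min_{\alpha\in\mathcal P}\max_{y\in D}\min_{i\in[d]}\frac{y_i}{\alpha_i}.$$ That is, the infimum is attained at some $\alpha\in\mathcal P$.
   Context: A ratio $\frac{y_i}{\alpha_i}$ with $\alpha_i=0$ is defined to be $+\infty$. In particular the inner quantity equals $+\infty$ at $\alpha=0$. *)

theory Defs
  imports "HOL-Analysis.Analysis" "HOL-Library.Extended_Real"
begin

definition ratio :: "real \<Rightarrow> real \<Rightarrow> ereal" where
  "ratio y a = (if a = 0 then \<infinity> else ereal (y / a))"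

definition inner_min :: "real ^ 'n::finite \<Rightarrow> real ^ 'n \<Rightarrow> ereal" where
  "inner_min \<alpha> y = Min (range (\<lambda>i. ratio (y $ i) (\<alpha> $ i)))"

definition outer_max :: "(real ^ 'n::finite) set \<Rightarrow> real ^ 'n \<Rightarrow> ereal" where
  "outer_max D \<alpha> = (SUP y\<in>D. inner_min \<alpha> y)"

definition nonneg_orthant :: "(real ^ 'n::finite) set" where
  "nonneg_orthant = {x. \<forall>i. 0 \<le> x $ i}"

end

theory Submission
  imports Defs
begin

lemma inner_min_ge:
  fixes \<alpha> y :: "real ^ 'n::finite"
  assumes "\<forall>i. t * \<alpha>$i \<le> y$i" and "\<forall>i. 0 \<le> \<alpha>$i"
  shows "ereal t \<le> inner_min \<alpha> y"
  unfolding inner_min_def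
proof (subst Min_ge_iff)
  show "finite (range (\<lambda>i. ratio (y $ i) (\<alpha> $ i)))" by simp
  show "range (\<lambda>i. ratio (y $ i) (\<alpha> $ i)) \<noteq> {}" by simp
  show "\<forall>a\<in>range (\<lambda>i. ratio (y $ i) (\<alpha> $ i)). ereal t \<le> a"
  proof
    fix a assume "a \<in> range (\<lambda>i. ratio (y $ i) (\<alpha> $ i))"
    then obtain i where a: "a = ratio (y $ i) (\<alpha> $ i)" by auto
    show "ereal t \<le> a"
    proof (cases "\<alpha>$i = 0")
      case True thus ?thesis by (simp add: a ratio_def)
    next
      case False
      hence "\<alpha>$i > 0" using assms(2) by (metis less_eq_real_def)
      thus ?thesis using assms(1) by (simp add: a ratio_def pos_le_divide_eq)
    qed
  qed
qed

lemma inner_min_gt: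
  fixes \<alpha> y :: "real ^ 'n::finite"
  assumes "ereal t < inner_min \<alpha> y" and "\<forall>i. 0 \<le> y$i" and "\<forall>i. 0 \<le> \<alpha>$i"
  shows "\<forall>i. t * \<alpha>$i \<le> y$i"
proof
  fix i
  have "ereal t < ratio (y $ i) (\<alpha> $ i)"
    using assms(1) unfolding inner_min_def by (subst (asm) Min_gr_iff) auto
  thus "t * \<alpha>$i \<le> y$i"
  proof (cases "\<alpha>$i = 0")
    case True thus ?thesis using assms(2) by simp
  next
    case False
    hence "\<alpha>$i > 0" using assms(3) by (metis less_eq_real_def)
    thus ?thesis using \<open>ereal t < ratio (y $ i) (\<alpha> $ i)\<close> False
      by (simp add: ratio_def pos_less_divide_eq)
  qed
qed

theorem mainTheorem5:
  fixes D P :: "(real ^ 'n::finite) set"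
  assumes "D \<noteq> {}" and "convex D" and "compact D" and "D \<subseteq> nonneg_orthant"
    and "P \<noteq> {}" and "polytope P" and "P \<subseteq> nonneg_orthant"
  shows "\<exists>\<alpha>0\<in>P. outer_max D \<alpha>0 = (INF \<alpha>\<in>P. outer_max D \<alpha>)"
proof -
  obtain V where V: "finite V" "P = convex hull V" using assms(6) unfolding polytope_def by blast
  have VP: "V \<subseteq> P" unfolding V(2) by (rule hull_subset)
  have Vne: "V \<noteq> {}"
  proof
    assume "V = {}"
    hence "P = {}" unfolding V(2) by simp
    thus False using assms(5) by contradiction
  qed
  define f where "f = outer_max D"
  obtain v0 where v0: "v0 \<in> V" "\<forall>v\<in>V. f v0 \<le> f v"
  proof -
    have "Min (f ` V) \<in> f ` V" using Vne V(1) by (intro Min_in) auto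
    then obtain v0 where "v0 \<in> V" "f v0 = Min (f ` V)" by auto
    moreover have "\<forall>v\<in>V. Min (f ` V) \<le> f v" using V(1) by (simp add: Min_le)
    ultimately show ?thesis using that by auto
  qed
  have Dnn: "\<forall>y\<in>D. \<forall>i. 0 \<le> y$i" using assms(4) unfolding nonneg_orthant_def by auto
  have Pnn: "\<forall>a\<in>P. \<forall>i. 0 \<le> a$i" using assms(7) unfolding nonneg_orthant_def by auto
  have key: "f v0 \<le> f a" if aP: "a \<in> P" for a
  proof (rule ccontr)
    assume "\<not> f v0 \<le> f a"
    hence "f a < f v0" by simp
    then obtain t where t: "f a < ereal t" "ereal t < f v0"
      using ereal_dense2 by blast
    define C where "C = {b. \<exists>y\<in>D. \<forall>i. t * b$i \<le> y$i}"
    have cC: "convex C" unfolding convex_def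
    proof (intro allI impI ballI)
      fix b1 b2 and u v :: real
      assume b: "b1 \<in> C" "b2 \<in> C" and uv: "0 \<le> u" "0 \<le> v" "u + v = 1"
      obtain y1 where y1: "y1 \<in> D" "\<forall>i. t * b1$i \<le> y1$i" using b(1) C_def by auto
      obtain y2 where y2: "y2 \<in> D" "\<forall>i. t * b2$i \<le> y2$i" using b(2) C_def by auto
      have "u *\<^sub>R y1 + v *\<^sub>R y2 \<in> D" using assms(2) y1(1) y2(1) uv by (rule convexD)
      moreover have "\<forall>i. t * (u *\<^sub>R b1 + v *\<^sub>R b2)$i \<le> (u *\<^sub>R y1 + v *\<^sub>R y2)$i"
      proof
        fix i
        have "u * (t * b1$i) \<le> u * y1$i" using uv(1) y1(2) by (intro mult_left_mono) auto
        moreover have "v * (t * b2$i) \<le> v * y2$i" using uv(2) y2(2) by (intro mult_left_mono) auto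
        ultimately show "t * (u *\<^sub>R b1 + v *\<^sub>R b2)$i \<le> (u *\<^sub>R y1 + v *\<^sub>R y2)$i"
          by (simp add: algebra_simps)
      qed
      ultimately show "u *\<^sub>R b1 + v *\<^sub>R b2 \<in> C" unfolding C_def by blast
    qed
    have "V \<subseteq> C"
    proof
      fix v assume vV: "v \<in> V"
      hence "ereal t < f v" using v0 t by (meson less_le_trans)
      then obtain y where y: "y \<in> D" "ereal t < inner_min v y"
        unfolding f_def outer_max_def by (auto simp: less_SUP_iff)
      have "\<forall>i. 0 \<le> v$i" using Pnn VP vV by blast
      thus "v \<in> C" unfolding C_def using inner_min_gt Dnn y by blast
    qed
    hence "P \<subseteq> C" using V(2) cC hull_minimal by blast
    then obtain y where y: "y \<in> D" "\<forall>i. t * a$i \<le> y$i" using aP C_def by auto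
    hence "ereal t \<le> inner_min a y" using inner_min_ge Pnn aP by blast
    also have "\<dots> \<le> f a" unfolding f_def outer_max_def using y(1) by (rule SUP_upper)
    finally show False using t(1) by simp
  qed
  have "f v0 = (INF \<alpha>\<in>P. f \<alpha>)"
  proof (rule antisym)
    show "f v0 \<le> (INF \<alpha>\<in>P. f \<alpha>)" using key by (rule INF_greatest)
    show "(INF \<alpha>\<in>P. f \<alpha>) \<le> f v0" using v0(1) VP by (intro INF_lower) auto
  qed
  thus ?thesis using v0(1) VP unfolding f_def by blast
qed

end
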